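(* Let $p\geq1$, $\mu>0$, and let $g:\mathbb{R}^n\to\mathbb{R}\cup\{+\infty\}$ be convex. Let $\lambda^{\ast}$ be the optimal solution of $$\min_{\lambda\in\mathbb{R}^n}\Big\{g(\lambda)+\frac{\mu}{1+\frac1p}\lVert\lambda\rVert^{1+\frac1p}\Big\},$$ and suppose $\lambda^{\ast}\neq0$. Let $\lambda^0\in\mathbb{R}^n$ and generate $\lambda^1,\dots,\lambda^N$ by: $t^k=\lVert\lambda^k\rVert^{\frac1p-1}$ if $\lambda^k\neq0$, $t^k=0$ otherwise, and $\lambda^{k+1}=\arg\min_{\lambda\in\mathbb{R}^n}\{g(\lambda)+\frac{\mu}{2}t^k\lVert\lambda\rVert^2\}$. Suppose $\lVert\lambda^0\rVert\geq\lVert\lambda^{\ast}\rVert$ and $\lambda^k\neq\lambda^{\ast}$ for $k=1,2,\dots,N$. Then $$\lVert\lambda^N-\lambda^{\ast}\rVert\leq\lVert\lambda^{\ast}\rVert\Big(e^{(1-\frac1p)^{N-1}\ln\frac{\lVert\lambda^0\rVert}{\lVert\lambda^{\ast}\rVert}}-1\Big)\leq\big(\lVert\lambda^0\rVert-\lVert\lambda^{\ast}\rVert\big)\Big(1-\frac1p\Big)^{N-1}.$$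
   Context: $\lVert\cdot\rVert$ is the Euclidean norm. The minimizers in the iteration are assumed to exist. *)

theory Defs
  imports "HOL-Analysis.Analysis" "HOL-Library.Extended_Real"
begin

definition ext_convex :: "('a::real_vector \<Rightarrow> ereal) \<Rightarrow> bool" where
  "ext_convex g \<longleftrightarrow> (\<forall>x. g x \<noteq> -\<infinity>) \<and>
     (\<forall>x y (s::real). 0 < s \<and> s < 1 \<longrightarrow>
        g ((1 - s) *\<^sub>R x + s *\<^sub>R y) \<le> ereal (1 - s) * g x + ereal s * g y)"

definition is_minimizer :: "('a \<Rightarrow> ereal) \<Rightarrow> 'a \<Rightarrow> bool" where
  "is_minimizer F x \<longleftrightarrow> (\<forall>y. F x \<le> F y)"

end

theory Submission
  imports Defs
begin


lemma amgm:
  fixes r Q :: real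
  assumes "r \<ge> 0" "0 \<le> Q" "Q \<le> 1"
  shows "r powr Q \<le> 1 + Q * (r - 1)"
proof (cases "r = 0")
  case True then show ?thesis using assms by simp
next
  case False
  then have "r powr Q * 1 powr (1 - Q) \<le> Q * r + (1 - Q) * 1"
    using assms by (intro Youngs_inequality_0) auto
  then show ?thesis by (simp add: algebra_simps)
qed

lemma var_ineq:
  fixes g :: "'a::real_inner \<Rightarrow> ereal"
  assumes cv: "ext_convex g" and c: "c \<ge> 0"
    and mn: "is_minimizer (\<lambda>x. g x + ereal (c * (norm x)\<^sup>2)) x"
    and gx: "g x \<noteq> \<infinity>" and gy: "g y \<noteq> \<infinity>" and s: "0 < s" "s < 1"
  shows "real_of_ereal (g y) - real_of_ereal (g x) + 2 * c * (x \<bullet> (y - x)) + c * s * (norm (y - x))\<^sup>2 \<ge> 0"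
proof -
  define z where "z = (1 - s) *\<^sub>R x + s *\<^sub>R y"
  obtain gx' where gx': "g x = ereal gx'" using gx cv unfolding ext_convex_def
    by (cases "g x") auto
  obtain gy' where gy': "g y = ereal gy'" using gy cv unfolding ext_convex_def
    by (cases "g y") auto
  have conv: "g z \<le> ereal (1 - s) * g x + ereal s * g y"
    using cv s unfolding ext_convex_def z_def by blast
  have m: "g x + ereal (c * (norm x)\<^sup>2) \<le> g z + ereal (c * (norm z)\<^sup>2)"
    using mn unfolding is_minimizer_def by blast
  have "g z \<le> ereal ((1 - s) * gx' + s * gy')" using conv gx' gy' by simp
  moreover have "g z \<noteq> -\<infinity>" using cv unfolding ext_convex_def by blast
  ultimately obtain gz where gz: "g z = ereal gz" "gz \<le> (1 - s) * gx' + s * gy'"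
    by (cases "g z") auto
  have m2: "gx' + c * (norm x)\<^sup>2 \<le> gz + c * (norm z)\<^sup>2" using m gz gx' by simp
  have zeq: "z = x + s *\<^sub>R (y - x)" unfolding z_def by (simp add: algebra_simps)
  have nz: "(norm z)\<^sup>2 = (norm x)\<^sup>2 + 2 * s * (x \<bullet> (y - x)) + s\<^sup>2 * (norm (y - x))\<^sup>2"
    unfolding zeq power2_norm_eq_inner by (simp add: inner_add_left inner_add_right algebra_simps power2_eq_square inner_commute)
  define P where "P = x \<bullet> (y - x)"
  define D where "D = (norm (y - x))\<^sup>2"
  define X where "X = (norm x)\<^sup>2"
  have m3: "gx' + c * X \<le> gz + (c * X + c * (2 * s * P) + c * (s\<^sup>2 * D))"
    using m2 nz unfolding P_def D_def X_def by (simp add: distrib_left)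
  have e: "0 \<le> s * (gy' - gx') + c * (2 * s * P) + c * (s\<^sup>2 * D)"
    using m3 gz(2) by (simp add: algebra_simps)
  have "s * (gy' - gx' + 2 * c * P + c * s * D) = s * (gy' - gx') + c * (2 * s * P) + c * (s\<^sup>2 * D)"
    by (simp add: algebra_simps power2_eq_square)
  with e have "s * (gy' - gx' + 2 * c * (x \<bullet> (y - x)) + c * s * (norm (y - x))\<^sup>2) \<ge> 0"
    unfolding P_def D_def by simp
  then have "gy' - gx' + 2 * c * (x \<bullet> (y - x)) + c * s * (norm (y - x))\<^sup>2 \<ge> 0"
    using s by (simp add: zero_le_mult_iff)
  then show ?thesis using gx' gy' by simp
qed

lemma small_limit:
  fixes A K :: real
  assumes "K \<ge> 0" "\<And>s. 0 < s \<Longrightarrow> s < 1 \<Longrightarrow> A + s * K \<ge> 0"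
  shows "A \<ge> 0"
proof (rule ccontr)
  assume "\<not> A \<ge> 0"
  define s where "s = min (1/2) (- A / (2 * (K + 1)))"
  have s0: "0 < s" "s < 1" using \<open>\<not> A \<ge> 0\<close> assms(1) unfolding s_def by (auto simp: field_simps)
  have "s * K \<le> (- A / (2 * (K + 1))) * K" using s0 assms(1) unfolding s_def
    by (intro mult_right_mono) auto
  also have "\<dots> < - A"
  proof -
    have "A * K \<le> 0" using \<open>\<not> A \<ge> 0\<close> assms(1) by (simp add: mult_nonpos_nonneg)
    then show ?thesis using \<open>\<not> A \<ge> 0\<close> assms(1) by (simp add: field_simps)
  qed
  finally show False using assms(2)[OF s0] by simp
qed

lemma pair_ineq:
  fixes g :: "'a::real_inner \<Rightarrow> ereal"
  assumes cv: "ext_convex g" and c: "c \<ge> 0" and d: "d \<ge> 0"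
    and mx: "is_minimizer (\<lambda>x. g x + ereal (c * (norm x)\<^sup>2)) x"
    and my: "is_minimizer (\<lambda>x. g x + ereal (d * (norm x)\<^sup>2)) y"
    and gx: "g x \<noteq> \<infinity>" and gy: "g y \<noteq> \<infinity>"
  shows "(c *\<^sub>R x - d *\<^sub>R y) \<bullet> (y - x) \<ge> 0"
proof -
  have "2 * ((c *\<^sub>R x - d *\<^sub>R y) \<bullet> (y - x)) + s * ((c + d) * (norm (y - x))\<^sup>2) \<ge> 0"
    if "0 < s" "s < 1" for s
  proof -
    have 1: "real_of_ereal (g y) - real_of_ereal (g x) + 2 * c * (x \<bullet> (y - x)) + c * s * (norm (y - x))\<^sup>2 \<ge> 0"
      using var_ineq[OF cv c mx gx gy that] .
    have 2: "real_of_ereal (g x) - real_of_ereal (g y) + 2 * d * (y \<bullet> (x - y)) + d * s * (norm (x - y))\<^sup>2 \<ge> 0"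
      using var_ineq[OF cv d my gy gx that] .
    have nc: "norm (x - y) = norm (y - x)" by (rule norm_minus_commute) have "(c *\<^sub>R x - d *\<^sub>R y) \<bullet> (y - x) = c * (x \<bullet> (y - x)) + d * (y \<bullet> (x - y))"
      by (simp add: inner_diff_left inner_diff_right algebra_simps)
    moreover have "s * ((c + d) * (norm (y - x))\<^sup>2) = c * s * (norm (y - x))\<^sup>2 + d * s * (norm (y - x))\<^sup>2"
      by (simp add: algebra_simps)
    moreover have "2 * (c * (x \<bullet> (y - x)) + d * (y \<bullet> (x - y))) = 2 * c * (x \<bullet> (y - x)) + 2 * d * (y \<bullet> (x - y))"
      by (simp add: algebra_simps)
    ultimately show ?thesis using 1 2[unfolded nc] by linarith
  qed
  then have "2 * ((c *\<^sub>R x - d *\<^sub>R y) \<bullet> (y - x)) \<ge> 0"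
    using small_limit[of "(c + d) * (norm (y - x))\<^sup>2" "2 * ((c *\<^sub>R x - d *\<^sub>R y) \<bullet> (y - x))"] c d
    by simp
  then show ?thesis by simp
qed



lemma geoA:
  fixes x y :: "'a::real_inner"
  assumes c: "c > 0" and cd: "c \<le> d" and H: "(c *\<^sub>R x - d *\<^sub>R y) \<bullet> (y - x) \<ge> 0"
  shows "norm (x - y) \<le> (d / c - 1) * norm y"
proof -
  have eq: "(c *\<^sub>R x - d *\<^sub>R y) \<bullet> (y - x) = (d - c) * (y \<bullet> (x - y)) - c * (norm (x - y))\<^sup>2"
    by (simp add: power2_norm_eq_inner inner_diff_left inner_diff_right algebra_simps inner_commute)
  have cs: "y \<bullet> (x - y) \<le> norm y * norm (x - y)" by (rule norm_cauchy_schwarz)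
  have "(d - c) * (y \<bullet> (x - y)) \<le> (d - c) * (norm y * norm (x - y))"
    using cd cs by (intro mult_left_mono) auto
  then have 1: "c * (norm (x - y))\<^sup>2 \<le> (d - c) * norm y * norm (x - y)" using H eq by simp
  show ?thesis
  proof (cases "norm (x - y) = 0")
    case True
    have "d / c - 1 \<ge> 0" using c cd by (simp add: field_simps)
    then show ?thesis using True by simp
  next
    case False
    then have pos: "norm (x - y) > 0" by simp
    have "c * norm (x - y) * norm (x - y) \<le> ((d - c) * norm y) * norm (x - y)"
      using 1 by (simp add: power2_eq_square algebra_simps)
    then have "c * norm (x - y) \<le> (d - c) * norm y" using pos by simp
    then have "norm (x - y) \<le> (d - c) * norm y / c" using c by (simp add: field_simps)
    also have "\<dots> = (d / c - 1) * norm y" using c by (simp add: field_simps)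
    finally show ?thesis .
  qed
qed

lemma geoB:
  fixes x y :: "'a::real_inner"
  assumes c: "c > 0" and cd: "c \<le> d" and H: "(c *\<^sub>R x - d *\<^sub>R y) \<bullet> (y - x) \<ge> 0"
  shows "norm x \<ge> norm y"
proof (rule ccontr)
  assume "\<not> norm x \<ge> norm y"
  then have lt: "norm x < norm y" by simp
  have eq: "(c *\<^sub>R x - d *\<^sub>R y) \<bullet> (y - x) = (c + d) * (x \<bullet> y) - c * (norm x)\<^sup>2 - d * (norm y)\<^sup>2"
    by (simp add: power2_norm_eq_inner inner_diff_left inner_diff_right algebra_simps inner_commute)
  have cs: "x \<bullet> y \<le> norm x * norm y" by (rule norm_cauchy_schwarz)
  have "(c + d) * (x \<bullet> y) \<le> (c + d) * (norm x * norm y)"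
    using c cd cs by (intro mult_left_mono) auto
  then have 1: "0 \<le> (c + d) * (norm x * norm y) - c * (norm x)\<^sup>2 - d * (norm y)\<^sup>2" using H eq by simp
  have 2: "(c + d) * (norm x * norm y) - c * (norm x)\<^sup>2 - d * (norm y)\<^sup>2
        = - ((c * norm x - d * norm y) * (norm x - norm y))"
    by (simp add: algebra_simps power2_eq_square)
  have a: "c * norm x - d * norm y < 0"
  proof -
    have "c * norm x \<le> d * norm x" using cd by (intro mult_right_mono) auto
    moreover have "d * norm x < d * norm y" using lt c cd by simp
    ultimately show ?thesis by simp
  qed
  have "(c * norm x - d * norm y) * (norm x - norm y) > 0"
    using a lt by (simp add: mult_neg_neg)
  then show False using 1 2 by simp
qed

lemma maj:
  fixes u u0 p :: real
  assumes u: "u \<ge> 0" and u0: "u0 > 0" and p: "p \<ge> 1"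
  shows "u powr (1 + 1/p) / (1 + 1/p) \<le> u0 powr (1 + 1/p) / (1 + 1/p) + u0 powr (1/p - 1) / 2 * (u\<^sup>2 - u0\<^sup>2)"
proof -
  define a where "a = 1 + 1/p"
  have p0: "0 < 1/p" "1/p \<le> 1" using p by auto
  have a1: "1 < a" "a \<le> 2" unfolding a_def using p0 by auto
  define r where "r = (u / u0)\<^sup>2"
  have r0: "r \<ge> 0" unfolding r_def by simp
  have "r powr (a/2) \<le> 1 + (a/2) * (r - 1)" using amgm[OF r0, of "a/2"] a1 by simp
  moreover have "r powr (a/2) = u powr a / u0 powr a"
  proof -
    have "r = (u/u0) powr 2" unfolding r_def using u u0 by simp
    then have "r powr (a/2) = (u/u0) powr a" by (simp add: powr_powr)
    then show ?thesis by (simp add: powr_divide)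
  qed
  ultimately have 1: "u powr a / u0 powr a \<le> 1 + (a/2) * (r - 1)" by simp
  have ua: "u0 powr a > 0" using u0 by simp
  have 2: "u powr a \<le> u0 powr a + (a/2) * (u0 powr a * (r - 1))"
    using 1 ua by (simp add: field_simps)
  have "u0 powr a * (r - 1) = u0 powr (a - 2) * (u\<^sup>2 - u0\<^sup>2)"
  proof -
    have "u0 powr (a - 2) = u0 powr a / u0\<^sup>2" using u0 by (simp add: powr_diff)
    then show ?thesis unfolding r_def using u0 by (simp add: field_simps power2_eq_square)
  qed
  with 2 have "u powr a \<le> u0 powr a + (a/2) * (u0 powr (a - 2) * (u\<^sup>2 - u0\<^sup>2))" by simp
  then have "u powr a / a \<le> u0 powr a / a + u0 powr (a - 2) / 2 * (u\<^sup>2 - u0\<^sup>2)"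
    using a1 by (simp add: field_simps)
  moreover have "a - 2 = 1/p - 1" unfolding a_def by simp
  ultimately show ?thesis unfolding a_def by simp
qed



theorem theorem4p6:
  fixes g :: "'a::euclidean_space \<Rightarrow> ereal"
    and p \<mu> :: real and lstar :: 'a and lam :: "nat \<Rightarrow> 'a" and N :: nat
  defines "t \<equiv> (\<lambda>k. if lam k \<noteq> 0 then norm (lam k) powr (1 / p - 1) else 0)"
  assumes "p \<ge> 1" and "\<mu> > 0"
    and "ext_convex g"
    and "is_minimizer (\<lambda>x. g x + ereal (\<mu> / (1 + 1 / p) * norm x powr (1 + 1 / p))) lstar"
    and "g lstar \<noteq> \<infinity>"
    and "lstar \<noteq> 0"
    and "N \<ge> 1"
    and "\<And>k. k < N \<Longrightarrow>
           is_minimizer (\<lambda>x. g x + ereal (\<mu> / 2 * t k * (norm x)\<^sup>2)) (lam (Suc k))"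
    and "norm (lam 0) \<ge> norm lstar"
    and "\<And>k. 1 \<le> k \<Longrightarrow> k \<le> N \<Longrightarrow> lam k \<noteq> lstar"
  shows "norm (lam N - lstar)
           \<le> norm lstar * (exp ((1 - 1 / p) ^ (N - 1) * ln (norm (lam 0) / norm lstar)) - 1)
       \<and> norm lstar * (exp ((1 - 1 / p) ^ (N - 1) * ln (norm (lam 0) / norm lstar)) - 1)
           \<le> (norm (lam 0) - norm lstar) * (1 - 1 / p) ^ (N - 1)"
proof -
  note p = assms(2) and mu = assms(3) and cv = assms(4) and mstar = assms(5)
    and gstar = assms(6) and nz = assms(7) and N1 = assms(8) and mk = assms(9)
    and l0 = assms(10)
  define q where "q = 1 - 1 / p"
  define n0 where "n0 = norm lstar"
  define R where "R = (\<lambda>k. norm (lam k) / n0)"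
  define d where "d = \<mu> / 2 * n0 powr (1 / p - 1)"
  have n0: "n0 > 0" unfolding n0_def using nz by simp
  have q01: "0 \<le> q" "q \<le> 1" unfolding q_def using p by auto
  have d0: "d > 0" unfolding d_def using mu n0 by simp
  have my: "is_minimizer (\<lambda>x. g x + ereal (d * (norm x)\<^sup>2)) lstar"
    unfolding is_minimizer_def
  proof
    fix w
    show "g lstar + ereal (d * (norm lstar)\<^sup>2) \<le> g w + ereal (d * (norm w)\<^sup>2)"
    proof (cases "g w = \<infinity>")
      case True then show ?thesis by simp
    next
      case False
      obtain gw where gw: "g w = ereal gw" using False cv unfolding ext_convex_def
        by (cases "g w") auto
      obtain gl where gl: "g lstar = ereal gl" using gstar cv unfolding ext_convex_def
        by (cases "g lstar") auto
      have "g lstar + ereal (\<mu> / (1 + 1 / p) * norm lstar powr (1 + 1 / p))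
          \<le> g w + ereal (\<mu> / (1 + 1 / p) * norm w powr (1 + 1 / p))"
        using mstar unfolding is_minimizer_def by blast
      then have 1: "gl + \<mu> * (norm lstar powr (1 + 1 / p) / (1 + 1 / p))
          \<le> gw + \<mu> * (norm w powr (1 + 1 / p) / (1 + 1 / p))" using gw gl by simp
      have 2: "norm w powr (1 + 1/p) / (1 + 1/p) \<le> n0 powr (1 + 1/p) / (1 + 1/p) + n0 powr (1/p - 1) / 2 * ((norm w)\<^sup>2 - n0\<^sup>2)"
        using maj[OF norm_ge_zero n0 p] .
      have 3: "\<mu> * (norm w powr (1 + 1/p) / (1 + 1/p)) \<le> \<mu> * (n0 powr (1 + 1/p) / (1 + 1/p)) + d * ((norm w)\<^sup>2 - n0\<^sup>2)"
      proof -
        have "\<mu> * (norm w powr (1 + 1/p) / (1 + 1/p)) \<le> \<mu> * (n0 powr (1 + 1/p) / (1 + 1/p) + n0 powr (1/p - 1) / 2 * ((norm w)\<^sup>2 - n0\<^sup>2))"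
          using mult_left_mono[OF 2, of \<mu>] mu by simp
        moreover have "\<mu> * (n0 powr (1 + 1/p) / (1 + 1/p) + n0 powr (1/p - 1) / 2 * ((norm w)\<^sup>2 - n0\<^sup>2))
           = \<mu> * (n0 powr (1 + 1/p) / (1 + 1/p)) + d * ((norm w)\<^sup>2 - n0\<^sup>2)"
          unfolding d_def by (simp add: field_simps)
        ultimately show ?thesis by simp
      qed
      have "gl + d * n0\<^sup>2 \<le> gw + d * (norm w)\<^sup>2"
        using 1 3 unfolding n0_def by (simp add: algebra_simps)
      then show ?thesis using gw gl unfolding n0_def by simp
    qed
  qed
  have step: "norm (lam (Suc k)) \<ge> n0 \<and> norm (lam (Suc k) - lstar) \<le> n0 * (R k powr q - 1)"
    if k: "k < N" and lk: "norm (lam k) \<ge> n0" for k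
  proof -
    define c where "c = \<mu> / 2 * t k"
    have lk0: "lam k \<noteq> 0" using lk n0 by auto
    have ct: "c = \<mu> / 2 * norm (lam k) powr (1 / p - 1)" unfolding c_def t_def using lk0 by simp
    have c0: "c > 0" unfolding ct using mu lk0 by simp
    have "norm (lam k) powr (1 / p - 1) \<le> n0 powr (1 / p - 1)"
      by (rule powr_mono2') (use p n0 lk in auto)
    then have cd: "c \<le> d" unfolding ct d_def using mu by simp
    have mx: "is_minimizer (\<lambda>x. g x + ereal (c * (norm x)\<^sup>2)) (lam (Suc k))"
      using mk[OF k] unfolding c_def .
    have gx: "g (lam (Suc k)) \<noteq> \<infinity>"
    proof
      assume "g (lam (Suc k)) = \<infinity>"
      moreover have "g (lam (Suc k)) + ereal (c * (norm (lam (Suc k)))\<^sup>2) \<le> g lstar + ereal (c * (norm lstar)\<^sup>2)"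
        using mx unfolding is_minimizer_def by blast
      ultimately show False using gstar by auto
    qed
    have H: "(c *\<^sub>R lam (Suc k) - d *\<^sub>R lstar) \<bullet> (lstar - lam (Suc k)) \<ge> 0"
      using pair_ineq[OF cv _ _ mx my gx gstar] c0 d0 by simp
    have A: "norm (lam (Suc k) - lstar) \<le> (d / c - 1) * n0"
      using geoA[OF c0 cd H] unfolding n0_def .
    have B: "norm (lam (Suc k)) \<ge> n0" using geoB[OF c0 cd H] unfolding n0_def .
    have "d / c = n0 powr (1 / p - 1) / norm (lam k) powr (1 / p - 1)"
      unfolding d_def ct using mu by simp
    also have "\<dots> = n0 powr (- q) / norm (lam k) powr (- q)" unfolding q_def by simp
    also have "\<dots> = norm (lam k) powr q / n0 powr q" by (simp add: powr_minus divide_inverse mult.commute)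
    also have "\<dots> = R k powr q" unfolding R_def by (simp add: powr_divide)
    finally have "d / c = R k powr q" .
    then show ?thesis using A B by (simp add: mult.commute)
  qed
  have ind: "norm (lam k) \<ge> n0 \<and> R k \<le> R 0 powr (q ^ k)" if "k \<le> N" for k
    using that
  proof (induction k)
    case 0
    have "R 0 > 0" unfolding R_def using l0 n0 unfolding n0_def by (intro divide_pos_pos) auto
    then show ?case using l0 unfolding n0_def by simp
  next
    case (Suc k)
    then have IH: "norm (lam k) \<ge> n0" "R k \<le> R 0 powr (q ^ k)" by auto
    have kN: "k < N" using Suc.prems by simp
    note st = step[OF kN IH(1)]
    have Rk0: "R k \<ge> 0" unfolding R_def using n0 by simp
    have "norm (lam (Suc k)) \<le> n0 + norm (lam (Suc k) - lstar)"
      using norm_triangle_ineq2[of "lam (Suc k)" lstar] unfolding n0_def by simp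
    also have "\<dots> \<le> n0 * R k powr q" using st by (simp add: algebra_simps)
    finally have "R (Suc k) \<le> R k powr q" unfolding R_def using n0 by (simp add: field_simps)
    also have "\<dots> \<le> (R 0 powr (q ^ k)) powr q" by (rule powr_mono2) (use q01 Rk0 IH in auto)
    also have "\<dots> = R 0 powr (q ^ Suc k)" by (simp add: powr_powr mult.commute)
    finally show ?case using st by simp
  qed
  obtain m where m: "N = Suc m" using N1 by (cases N) auto
  have R01: "R 0 \<ge> 1" unfolding R_def using l0 n0 unfolding n0_def by simp
  have e: "exp (q ^ m * ln (norm (lam 0) / norm lstar)) = R 0 powr (q ^ m)"
  proof -
    have "lam 0 \<noteq> 0" using l0 nz by auto
    then show ?thesis using R01 nz unfolding R_def n0_def by (simp add: powr_def)
  qed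
  have im: "norm (lam m) \<ge> n0" "R m \<le> R 0 powr (q ^ m)" using ind[of m] m by auto
  have Rm0: "R m \<ge> 0" unfolding R_def using n0 by simp
  have "norm (lam N - lstar) \<le> n0 * (R m powr q - 1)" using step[of m] im m by simp
  also have "\<dots> \<le> n0 * (R 0 powr (q ^ m) - 1)"
  proof -
    have "R m powr q \<le> (R 0 powr (q ^ m)) powr q" by (rule powr_mono2) (use q01 Rm0 im in auto)
    also have "\<dots> = R 0 powr (q ^ Suc m)" by (simp add: powr_powr mult.commute)
    also have "\<dots> \<le> R 0 powr (q ^ m)"
      by (rule powr_mono[OF _ R01]) (use q01 power_decreasing[of m "Suc m" q] in auto)
    finally show ?thesis using n0 by simp
  qed
  finally have P1: "norm (lam N - lstar) \<le> n0 * (R 0 powr (q ^ m) - 1)" .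
  have Q01: "0 \<le> q ^ m" "q ^ m \<le> 1" using q01 by (auto simp: power_le_one)
  have "R 0 powr (q ^ m) \<le> 1 + q ^ m * (R 0 - 1)" using amgm[of "R 0" "q ^ m"] R01 Q01 by simp
  then have "n0 * (R 0 powr (q ^ m) - 1) \<le> n0 * (q ^ m * (R 0 - 1))" using n0 by simp
  also have "\<dots> = (norm (lam 0) - n0) * q ^ m" unfolding R_def using n0 by (simp add: field_simps)
  finally have P2: "n0 * (R 0 powr (q ^ m) - 1) \<le> (norm (lam 0) - n0) * q ^ m" .
  show ?thesis using P1 P2 e m unfolding q_def n0_def by simp
qed

end
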